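(* Let $(G,f)\in\mathcal C$ with $|V(G)|=\aleph_0$. If $P$ is a hereditary property and $P(G,f)$ holds, then $G$ possesses a perfect $f$-factor.
   Context: A graph is $G=(V,E)$ with $V$ a nonempty set and $E\subseteq\{e\subseteq V:|e|=2\}$. For $F\subseteq E$ and $x\in V$, $d_F(x)$ is the cardinal $|\{e\in F:x\in e\}|$. For $f:V\to$ Cardinals, an $f$-factor of $G$ is $F\subseteq E$ with $d_F(x)\le f(x)$ for all $x$; it is perfect if $d_F(x)=f(x)$ for all $x$. $\mathcal C$ is the class of all pairs $(G,f)$ with $G=(V,E)$ a graph, $f:V\to$ Cardinals, and $f(x)\le d_E(x)$ for all $x\in V$. A property $P$ is a class of pairs; $P(G,f)$ means that $(G,f)\in\mathcal C$ and $(G,f)$ has property $P$. For $x,y\in V$, $G-\{x,y\}$ denotes $(V,E\setminus\{\{x,y\}\})$, and $f_{x,y}(v)=f(v)-1$ if $v\in\{x,y\}$ and $1\le f(v)<\aleph_0$, $f_{x,y}(v)=f(v)$ otherwise. $P$ is hereditary if for every $(G,f)$ with $P(G,f)$ and every $x\in V(G)$ with $f(x)>0$ there is $y\in V(G)$ with $f(y)>0$, $\{x,y\}\in E(G)$ and $P(G-\{x,y\},f_{x,y})$. *)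

theory Defs
  imports Main "HOL-Library.Extended_Nat"
begin

(* A graph is a pair (V, E); cardinal values are represented in enat,
   where \<infinity> stands for aleph_0 (sufficient: all degrees in the
   countable graphs considered are at most aleph_0). *)

definition is_graph :: "'a set \<Rightarrow> 'a set set \<Rightarrow> bool" where
  "is_graph V E \<longleftrightarrow> V \<noteq> {} \<and> E \<subseteq> {e. e \<subseteq> V \<and> card e = 2}"

definition deg :: "'a set set \<Rightarrow> 'a \<Rightarrow> enat" where
  "deg F x = (if finite {e\<in>F. x \<in> e} then enat (card {e\<in>F. x \<in> e}) else \<infinity>)"

definition is_factor :: "'a set \<Rightarrow> 'a set set \<Rightarrow> ('a \<Rightarrow> enat) \<Rightarrow> 'a set set \<Rightarrow> bool" where
  "is_factor V E f F \<longleftrightarrow> F \<subseteq> E \<and> (\<forall>x\<in>V. deg F x \<le> f x)"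

definition is_perfect_factor :: "'a set \<Rightarrow> 'a set set \<Rightarrow> ('a \<Rightarrow> enat) \<Rightarrow> 'a set set \<Rightarrow> bool" where
  "is_perfect_factor V E f F \<longleftrightarrow> F \<subseteq> E \<and> (\<forall>x\<in>V. deg F x = f x)"

definition inC :: "'a set \<Rightarrow> 'a set set \<Rightarrow> ('a \<Rightarrow> enat) \<Rightarrow> bool" where
  "inC V E f \<longleftrightarrow> is_graph V E \<and> (\<forall>x\<in>V. f x \<le> deg E x)"

(* P(G,f): (G,f) in C and (G,f) has property P *)
definition holds :: "('a set \<Rightarrow> 'a set set \<Rightarrow> ('a \<Rightarrow> enat) \<Rightarrow> bool)
    \<Rightarrow> 'a set \<Rightarrow> 'a set set \<Rightarrow> ('a \<Rightarrow> enat) \<Rightarrow> bool" where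
  "holds P V E f \<longleftrightarrow> inC V E f \<and> P V E f"

definition fxy :: "('a \<Rightarrow> enat) \<Rightarrow> 'a \<Rightarrow> 'a \<Rightarrow> 'a \<Rightarrow> enat" where
  "fxy f x y v = (if v \<in> {x, y} \<and> 1 \<le> f v \<and> f v < \<infinity> then f v - 1 else f v)"

definition hereditary :: "('a set \<Rightarrow> 'a set set \<Rightarrow> ('a \<Rightarrow> enat) \<Rightarrow> bool) \<Rightarrow> bool" where
  "hereditary P \<longleftrightarrow> (\<forall>V E f. holds P V E f \<longrightarrow>
     (\<forall>x\<in>V. f x > 0 \<longrightarrow>
        (\<exists>y\<in>V. f y > 0 \<and> {x, y} \<in> E \<and> holds P V (E - {{x, y}}) (fxy f x y))))"

end

theory Submission
  imports Defs "HOL-Library.Countable_Set"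
begin

definition sched :: "'a set \<Rightarrow> nat \<Rightarrow> 'a" where
  "sched V n = from_nat_into V (fst (prod_decode n))"

definition pick where
  "pick P V E' f' x = (SOME y. y\<in>V \<and> f' y > 0 \<and> {x, y} \<in> E' \<and> holds P V (E' - {{x, y}}) (fxy f' x y))"

definition nxt where
  "nxt P V s x = (if snd s x > 0 then (fst s - {{x, pick P V (fst s) (snd s) x}},
      fxy (snd s) x (pick P V (fst s) (snd s) x)) else s)"

primrec st where
  "st P V E f 0 = (E, f)"
| "st P V E f (Suc n) = nxt P V (st P V E f n) (sched V n)"

locale hsetup =
  fixes V :: "'a set" and E :: "'a set set" and f :: "'a \<Rightarrow> enat"
    and P :: "'a set \<Rightarrow> 'a set set \<Rightarrow> ('a \<Rightarrow> enat) \<Rightarrow> bool"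
  assumes her: "hereditary P" and hp: "holds P V E f" and cV: "countable V"
begin

abbreviation "Es n \<equiv> fst (st P V E f n)"
abbreviation "fs n \<equiv> snd (st P V E f n)"
abbreviation "xx n \<equiv> sched V n"
abbreviation "pk n \<equiv> fs n (xx n) > 0"
abbreviation "yy n \<equiv> pick P V (Es n) (fs n) (xx n)"
abbreviation "ed n \<equiv> {xx n, yy n}"

lemma Vne: "V \<noteq> {}"
  using hp unfolding holds_def inC_def is_graph_def by auto

lemma xxV: "xx n \<in> V"
  unfolding sched_def using Vne by (simp add: from_nat_into)

lemma step_pk: "pk n \<Longrightarrow> Es (Suc n) = Es n - {ed n} \<and> fs (Suc n) = fxy (fs n) (xx n) (yy n)"
  by (simp add: nxt_def split: prod.splits)

lemma step_npk: "\<not> pk n \<Longrightarrow> Es (Suc n) = Es n \<and> fs (Suc n) = fs n"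
  by (simp add: nxt_def)

lemma inv: "holds P V (Es n) (fs n) \<and> (pk n \<longrightarrow> yy n \<in> V \<and> fs n (yy n) > 0 \<and> ed n \<in> Es n)"
proof (induction n)
  case 0
  have "holds P V (Es 0) (fs 0)" using hp by simp
  moreover have "pk 0 \<longrightarrow> (\<exists>y. y\<in>V \<and> fs 0 y > 0 \<and> {xx 0, y} \<in> Es 0 \<and> holds P V (Es 0 - {{xx 0, y}}) (fxy (fs 0) (xx 0) y))"
    using her calculation xxV unfolding hereditary_def by blast
  ultimately show ?case unfolding pick_def by (metis (mono_tags, lifting) someI_ex)
next
  case (Suc n)
  have "holds P V (Es (Suc n)) (fs (Suc n))"
  proof (cases "pk n")
    case True
    have "\<exists>y. y\<in>V \<and> fs n y > 0 \<and> {xx n, y} \<in> Es n \<and> holds P V (Es n - {{xx n, y}}) (fxy (fs n) (xx n) y)"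
      using her Suc True xxV unfolding hereditary_def by blast
    then have "holds P V (Es n - {ed n}) (fxy (fs n) (xx n) (yy n))"
      unfolding pick_def by (metis (mono_tags, lifting) someI_ex)
    then show ?thesis using step_pk[OF True] by simp
  next
    case False
    then show ?thesis using step_npk[OF False] Suc by simp
  qed
  moreover have "pk (Suc n) \<longrightarrow> (\<exists>y. y\<in>V \<and> fs (Suc n) y > 0 \<and> {xx (Suc n), y} \<in> Es (Suc n) \<and> holds P V (Es (Suc n) - {{xx (Suc n), y}}) (fxy (fs (Suc n)) (xx (Suc n)) y))"
    using her calculation xxV unfolding hereditary_def by blast
  ultimately show ?case unfolding pick_def by (metis (mono_tags, lifting) someI_ex)
qed

lemma edcard: "pk n \<Longrightarrow> card (ed n) = 2 \<and> ed n \<in> E"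
proof -
  assume "pk n"
  have "holds P V (Es n) (fs n)" "ed n \<in> Es n" using inv \<open>pk n\<close> by auto
  moreover have "Es n \<subseteq> E"
  proof (induction n)
    case (Suc n) then show ?case using step_pk step_npk by (cases "pk n") auto
  qed simp
  ultimately show ?thesis unfolding holds_def inC_def is_graph_def by auto
qed

lemma xy_ne: "pk n \<Longrightarrow> xx n \<noteq> yy n"
  using edcard by fastforce

lemma Es_anti: "m \<le> n \<Longrightarrow> Es n \<subseteq> Es m"
proof (induction n rule: dec_induct)
  case (step n) then show ?case using step_pk step_npk by (cases "pk n") auto
qed simp

lemma ed_inj: "pk m \<Longrightarrow> pk n \<Longrightarrow> ed m = ed n \<Longrightarrow> m = n"
proof (rule ccontr)
  have key: "ed a \<noteq> ed b" if "pk a" "pk b" "a < b" for a b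
  proof -
    have "ed b \<in> Es b" using inv that by auto
    moreover have "Es b \<subseteq> Es (Suc a)" by (rule Es_anti) (use that in simp)
    moreover have "ed a \<notin> Es (Suc a)" using step_pk that by auto
    ultimately show ?thesis by auto
  qed
  assume "pk m" "pk n" "ed m = ed n" "m \<noteq> n"
  then show False using key by (metis linorder_neq_iff)
qed

definition Mv where "Mv v = {m. pk m \<and> v \<in> ed m}"
definition cnt where "cnt n v = card (Mv v \<inter> {..<n})"

lemma cnt_Suc: "cnt (Suc n) v = cnt n v + (if n \<in> Mv v then 1 else 0)"
proof -
  have "Mv v \<inter> {..<Suc n} = (if n \<in> Mv v then insert n (Mv v \<inter> {..<n}) else Mv v \<inter> {..<n})"
    by (auto simp: lessThan_Suc)
  then show ?thesis unfolding cnt_def by auto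
qed

lemma fs_inf: "f v = \<infinity> \<Longrightarrow> fs n v = \<infinity>"
proof (induction n)
  case (Suc n) then show ?case using step_pk step_npk by (cases "pk n") (auto simp: fxy_def)
qed simp

lemma fs_fin: "f v \<noteq> \<infinity> \<Longrightarrow> fs n v + enat (cnt n v) = f v"
proof (induction n)
  case 0 then show ?case by (simp add: cnt_def zero_enat_def[symmetric])
next
  case (Suc n)
  show ?case
  proof (cases "n \<in> Mv v")
    case True
    then have pkn: "pk n" and vin: "v = xx n \<or> v = yy n" by (auto simp: Mv_def)
    have pos: "fs n v > 0" using pkn vin inv by auto
    have fin: "fs n v < \<infinity>" using Suc by (metis enat_ord_simps(4) plus_eq_infty_iff_enat)
    have "fs (Suc n) v = fs n v - 1" using step_pk[OF pkn] pos fin vin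
      by (auto simp: fxy_def ileI1 one_eSuc)
    moreover obtain k where k: "fs n v = enat k" using fin by auto
    ultimately show ?thesis using True Suc pos by (cases k) (auto simp: cnt_Suc zero_enat_def one_enat_def)
  next
    case False
    have "fs (Suc n) v = fs n v"
    proof (cases "pk n")
      case True
      then have "v \<notin> {xx n, yy n}" using False by (auto simp: Mv_def)
      then show ?thesis using step_pk[OF True] by (simp add: fxy_def)
    qed (use step_npk in auto)
    then show ?thesis using False Suc by (simp add: cnt_Suc)
  qed
qed

lemma sched_inf: "v \<in> V \<Longrightarrow> \<exists>m\<ge>N. xx m = v"
proof -
  assume v: "v \<in> V"
  let ?i = "to_nat_on V v"
  have "xx (prod_encode (?i, N)) = v" unfolding sched_def using v cV
    by (simp add: from_nat_into_to_nat_on)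
  moreover have "N \<le> prod_encode (?i, N)" by (rule le_prod_encode_2)
  ultimately show ?thesis by blast
qed

lemma edge_set: "{e \<in> {ed m | m. pk m}. v \<in> e} = ed ` Mv v"
  unfolding Mv_def by auto

lemma inj_ed: "inj_on ed (Mv v)"
  unfolding inj_on_def Mv_def using ed_inj by auto

lemma deg_ok: "v \<in> V \<Longrightarrow> deg {ed m | m. pk m} v = f v"
proof -
  assume v: "v \<in> V"
  show ?thesis
  proof (cases "f v = \<infinity>")
    case True
    have "infinite (Mv v)"
    proof -
      have "\<exists>m\<ge>N. m \<in> Mv v" for N
      proof -
        obtain m where "m \<ge> N" "xx m = v" using sched_inf v by blast
        moreover have "pk m" using fs_inf[OF True] calculation by simp
        ultimately show ?thesis by (auto simp: Mv_def)
      qed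
      then show ?thesis using infinite_nat_iff_unbounded_le by blast
    qed
    then have "infinite (ed ` Mv v)" using inj_ed finite_image_iff by blast
    then show ?thesis unfolding deg_def edge_set using True by simp
  next
    case False
    then obtain k where k: "f v = enat k" by auto
    have cle: "cnt n v \<le> k" for n using fs_fin[OF False, of n] k
      by (metis enat_ord_simps(1) le_iff_add add.commute)
    have fin: "finite (Mv v)"
    proof (rule ccontr)
      assume "infinite (Mv v)"
      then obtain A where "A \<subseteq> Mv v" "finite A" "card A = Suc k" using infinite_arbitrarily_large by blast
      then obtain n where "A \<subseteq> {..<n}"
        by (metis finite_nat_iff_bounded subset_eq lessThan_iff)
      then have "card A \<le> cnt n v" unfolding cnt_def using \<open>A \<subseteq> Mv v\<close>
        by (intro card_mono) auto
      then show False using cle[of n] \<open>card A = Suc k\<close> by simp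
    qed
    then obtain N where N: "Mv v \<subseteq> {..<N}"
      by (metis finite_nat_iff_bounded subset_eq lessThan_iff)
    have cN: "cnt m v = card (Mv v)" if "m \<ge> N" for m
      unfolding cnt_def using N that by (metis Int_absorb2 inf.absorb_iff1 inf.orderE lessThan_subset_iff subset_trans)
    have "card (Mv v) = k"
    proof (rule ccontr)
      assume ne: "card (Mv v) \<noteq> k"
      obtain m where m: "m \<ge> N" "xx m = v" using sched_inf v by blast
      have "card (Mv v) < k" using ne cle[of N] cN[of N] by simp
      then have "fs m v > 0" using fs_fin[OF False, of m] k cN[OF m(1)]
        by (metis add.left_neutral enat.inject gr_zeroI less_irrefl)
      then have "m \<in> Mv v" using m by (auto simp: Mv_def)
      then show False using N m by auto
    qed
    moreover have "card (ed ` Mv v) = card (Mv v)" using inj_ed card_image by blast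
    ultimately show ?thesis unfolding deg_def edge_set using k fin by simp
  qed
qed

lemma result: "is_perfect_factor V E f {ed m | m. pk m}"
  unfolding is_perfect_factor_def using edcard deg_ok by blast

end

theorem theorem1:
  fixes V :: "'a set" and E :: "'a set set" and f :: "'a \<Rightarrow> enat"
    and P :: "'a set \<Rightarrow> 'a set set \<Rightarrow> ('a \<Rightarrow> enat) \<Rightarrow> bool"
  assumes "inC V E f"
    and "countable V" and "infinite V"
    and "hereditary P"
    and "holds P V E f"
  shows "\<exists>F. is_perfect_factor V E f F"
proof -
  interpret hsetup V E f P using assms by unfold_locales auto
  show ?thesis using result by blast
qed

end
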